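(* Assume $\mu$ satisfies $(\mathrm H_\mu)$ and define $\ell$ and $Q_n$ as in the context. There is a constant $C>0$ such that for every $n\ge1$, \[ \frac{1}{1-\ell(Q_n)}\cdot\frac{\ell(Q_n)}{\ell(Q_{n+1})}\le1+C\,\ell(Q_n). \]
   Context: Condition $(\mathrm H_\mu)$: $\mu=(\mu_k)_{k\ge0}$ is a probability measure on $\mathbb Z_+$ with $\sum_k k\mu_k=1$, and there is a slowly varying function $L:\mathbb R_+\to\mathbb R_+$ with $\mu_n=L(n)/n^2$ for all $n\ge1$. Let $G_\mu(s)=\sum_k\mu_ks^k$ and for $s\in(0,1]$ let $\ell(s)=\big(G_\mu(1-s)-(1-s)\big)/s$, so $G_\mu(s)=s+(1-s)\ell(1-s)$. Let $Q_n=\mathbf P(\mathcal H\ge n)$ where $\mathcal H$ is the height (maximal distance of a vertex from the root) of a $\mu$-Bienaymé (Galton–Watson) tree; then $Q_{n+1}=Q_n(1-\ell(Q_n))$. *)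

theory Defs
  imports "HOL-Analysis.Analysis"
begin

definition slowly_varying :: "(real \<Rightarrow> real) \<Rightarrow> bool" where
  "slowly_varying L \<longleftrightarrow> L \<in> borel_measurable borel \<and> (\<forall>x>0. L x > 0) \<and>
     (\<forall>lam>0. ((\<lambda>x. L (lam * x) / L x) \<longlongrightarrow> 1) at_top)"

definition H_mu :: "(nat \<Rightarrow> real) \<Rightarrow> bool" where
  "H_mu \<mu> \<longleftrightarrow> (\<forall>k. \<mu> k \<ge> 0) \<and> \<mu> sums 1 \<and> (\<lambda>k. real k * \<mu> k) sums 1 \<and>
     (\<exists>L. slowly_varying L \<and> (\<forall>n\<ge>1. \<mu> n = L (real n) / (real n)^2))"

definition Gmu :: "(nat \<Rightarrow> real) \<Rightarrow> real \<Rightarrow> real" where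
  "Gmu \<mu> s = (\<Sum>k. \<mu> k * s ^ k)"

definition ell :: "(nat \<Rightarrow> real) \<Rightarrow> real \<Rightarrow> real" where
  "ell \<mu> s = (Gmu \<mu> (1 - s) - (1 - s)) / s"

text \<open>Q_n = P(height \<ge> n): Q_0 = 1 and Q_{n+1} = 1 - G_mu(1 - Q_n) = Q_n (1 - ell(Q_n)).\<close>
fun Qseq :: "(nat \<Rightarrow> real) \<Rightarrow> nat \<Rightarrow> real" where
  "Qseq \<mu> 0 = 1"
| "Qseq \<mu> (Suc n) = Qseq \<mu> n * (1 - ell \<mu> (Qseq \<mu> n))"

end

theory Submission
  imports Defs
begin

definition psi :: "nat \<Rightarrow> real \<Rightarrow> real" where
  "psi k s = (\<Sum>j<k. (1 - (1-s)^j))"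

definition phi :: "nat \<Rightarrow> real \<Rightarrow> real" where
  "phi k s = (\<Sum>j<k. \<Sum>i<j. (1-s)^i)"

lemma one_minus_pow: "1 - (1-s)^j = s * (\<Sum>i<j. (1-s)^i)" for s :: real
  by (induction j) (simp_all add: algebra_simps)

lemma psi_phi: "psi k s = s * phi k s"
  unfolding psi_def phi_def by (simp add: one_minus_pow sum_distrib_left)

lemma psi_eq: "s \<noteq> 0 \<Longrightarrow> psi k s = ((1-s)^k - 1 + real k * s) / s"
proof (induction k)
  case 0 then show ?case by (simp add: psi_def)
next
  case (Suc k)
  have "psi (Suc k) s = psi k s + (1 - (1-s)^k)" by (simp add: psi_def)
  also have "\<dots> = ((1-s)^k - 1 + real k * s) / s + (1 - (1-s)^k)" using Suc by simp
  also have "\<dots> = ((1-s)^Suc k - 1 + real (Suc k) * s) / s" using Suc.prems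
    by (simp add: field_simps)
  finally show ?case .
qed

lemma phi_anti: "0 \<le> t \<Longrightarrow> t \<le> s \<Longrightarrow> s \<le> 1 \<Longrightarrow> phi k s \<le> phi k t"
  unfolding phi_def by (intro sum_mono power_mono) auto

lemma psi_mono: "0 \<le> t \<Longrightarrow> t \<le> s \<Longrightarrow> s \<le> 1 \<Longrightarrow> psi k t \<le> psi k s"
  unfolding psi_def by (intro sum_mono) (auto intro!: power_mono)

lemma psi_nonneg: "0 \<le> s \<Longrightarrow> s \<le> 1 \<Longrightarrow> 0 \<le> psi k s"
  unfolding psi_def by (intro sum_nonneg) (auto simp: power_le_one)

lemma ell_rep:
  assumes H: "H_mu \<mu>" and s: "0 < s" "s \<le> 1"
  shows "(\<lambda>k. \<mu> k * psi k s) sums ell \<mu> s"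
proof -
  have nn: "\<And>k. \<mu> k \<ge> 0" and s1: "\<mu> sums 1" and s2: "(\<lambda>k. real k * \<mu> k) sums 1"
    using H unfolding H_mu_def by auto
  have sm: "summable \<mu>" using s1 by (simp add: sums_iff)
  have "summable (\<lambda>k. \<mu> k * (1-s)^k)"
    by (rule summable_comparison_test'[OF sm, of 0]) (use nn s in \<open>auto simp: abs_mult power_le_one intro!: mult_left_le\<close>)
  then have g: "(\<lambda>k. \<mu> k * (1-s)^k) sums Gmu \<mu> (1-s)" by (simp add: Gmu_def summable_sums)
  have "(\<lambda>k. (\<mu> k * (1-s)^k - \<mu> k + s * (real k * \<mu> k)) / s) sums ((Gmu \<mu> (1-s) - 1 + s * 1) / s)"
    by (intro sums_divide sums_add sums_diff sums_mult g s1 s2)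
  moreover have "\<And>k. (\<mu> k * (1-s)^k - \<mu> k + s * (real k * \<mu> k)) / s = \<mu> k * psi k s"
    using s by (simp add: psi_eq field_simps)
  ultimately show ?thesis by (simp add: ell_def algebra_simps)
qed

lemma ell_props:
  assumes H: "H_mu \<mu>" and s: "0 < s" "s \<le> 1"
  shows "0 \<le> ell \<mu> s" "ell \<mu> s \<le> \<mu> 0"
proof -
  have nn: "\<And>k. \<mu> k \<ge> 0" using H unfolding H_mu_def by auto
  note r = ell_rep[OF H s]
  note r1 = ell_rep[OF H, of 1, simplified]
  have e1: "ell \<mu> 1 = \<mu> 0" by (simp add: ell_def Gmu_def)
  show "0 \<le> ell \<mu> s"
  proof (rule sums_le[OF _ sums_zero r])
    fix k show "0 \<le> \<mu> k * psi k s" using nn[of k] psi_nonneg[of s k] s by simp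
  qed
  show "ell \<mu> s \<le> \<mu> 0" unfolding e1[symmetric]
  proof (rule sums_le[OF _ r r1])
    fix k show "\<mu> k * psi k s \<le> \<mu> k * psi k 1"
      using nn[of k] psi_mono[of s 1 k] s by (simp add: mult_left_mono)
  qed
qed

lemma ell_ratio:
  assumes H: "H_mu \<mu>" and ts: "0 < t" "t \<le> s" "s \<le> 1"
  shows "t * ell \<mu> s \<le> s * ell \<mu> t"
proof -
  have nn: "\<And>k. \<mu> k \<ge> 0" using H unfolding H_mu_def by auto
  have a: "(\<lambda>k. t * (\<mu> k * psi k s)) sums (t * ell \<mu> s)"
    by (intro sums_mult ell_rep[OF H]) (use ts in auto)
  have b: "(\<lambda>k. s * (\<mu> k * psi k t)) sums (s * ell \<mu> t)"
    by (intro sums_mult ell_rep[OF H]) (use ts in auto)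
  have "t * (\<mu> k * psi k s) \<le> s * (\<mu> k * psi k t)" for k
  proof -
    have "t * psi k s = t * s * phi k s" by (simp add: psi_phi)
    also have "\<dots> \<le> t * s * phi k t" using ts by (intro mult_left_mono phi_anti) auto
    also have "\<dots> = s * psi k t" by (simp add: psi_phi)
    finally show ?thesis using nn[of k] by (metis mult.left_commute mult_left_mono)
  qed
  then show ?thesis by (rule sums_le[OF _ a b])
qed

lemma mu0_lt1:
  assumes H: "H_mu \<mu>" shows "\<mu> 0 < 1"
proof (rule ccontr)
  assume c: "\<not> \<mu> 0 < 1"
  have nn: "\<And>k. \<mu> k \<ge> 0" and s1: "\<mu> sums 1" and s2: "(\<lambda>k. real k * \<mu> k) sums 1"
    using H unfolding H_mu_def by auto
  have sm: "summable \<mu>" using s1 by (simp add: sums_iff)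
  have "(\<Sum>n. \<mu> (Suc n)) = 1 - \<mu> 0" using suminf_split_head[OF sm] s1 by (simp add: sums_iff)
  moreover have "(\<Sum>n. \<mu> (Suc n)) \<ge> 0" using nn by (intro suminf_nonneg) (auto simp: summable_Suc_iff sm)
  ultimately have "(\<Sum>n. \<mu> (Suc n)) = 0" using c by linarith
  then have z: "\<forall>n. \<mu> (Suc n) = 0" using suminf_eq_zero_iff[of "\<lambda>n. \<mu> (Suc n)"] nn
    by (simp add: summable_Suc_iff sm)
  have "\<And>k. real k * \<mu> k = 0" using z by (metis mult_zero_left not0_implies_Suc of_nat_0 mult_zero_right)
  then have "(\<lambda>k. real k * \<mu> k) = (\<lambda>_. 0)" by auto
  then have "(\<lambda>k. real k * \<mu> k) sums 0" by (simp add: sums_zero)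
  with s2 show False using sums_unique2 by fastforce
qed

lemma Q_props:
  assumes H: "H_mu \<mu>" shows "0 < Qseq \<mu> n \<and> Qseq \<mu> n \<le> 1"
proof (induction n)
  case 0 then show ?case by simp
next
  case (Suc n)
  have "0 \<le> ell \<mu> (Qseq \<mu> n)" "ell \<mu> (Qseq \<mu> n) \<le> \<mu> 0"
    using ell_props[OF H] Suc by auto
  moreover have "\<mu> 0 < 1" by (rule mu0_lt1[OF H])
  ultimately show ?case using Suc
    by (auto intro!: mult_pos_pos simp: mult_le_one)
qed

theorem mainTheorem8:
  fixes \<mu> :: "nat \<Rightarrow> real"
  assumes "H_mu \<mu>"
  shows "\<exists>C>0. \<forall>n\<ge>1.
    (1 / (1 - ell \<mu> (Qseq \<mu> n))) * (ell \<mu> (Qseq \<mu> n) / ell \<mu> (Qseq \<mu> (Suc n)))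
      \<le> 1 + C * ell \<mu> (Qseq \<mu> n)"
proof -
  define m where "m = \<mu> 0"
  have m1: "m < 1" using mu0_lt1[OF assms] by (simp add: m_def)
  define C where "C = 2 / (1 - m)^2"
  have Cpos: "C > 0" using m1 by (simp add: C_def)
  have "(1 / (1 - ell \<mu> (Qseq \<mu> n))) * (ell \<mu> (Qseq \<mu> n) / ell \<mu> (Qseq \<mu> (Suc n)))
      \<le> 1 + C * ell \<mu> (Qseq \<mu> n)" for n
  proof -
    define s where "s = Qseq \<mu> n"
    define e where "e = ell \<mu> s"
    define t where "t = Qseq \<mu> (Suc n)"
    have s: "0 < s" "s \<le> 1" using Q_props[OF assms] s_def by auto
    have e: "0 \<le> e" "e \<le> m" using ell_props[OF assms s] by (auto simp: e_def m_def)
    have td: "t = s * (1 - e)" by (simp add: t_def s_def e_def)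
    have t0: "0 < t" using Q_props[OF assms, of "Suc n"] t_def by simp
    have "s * (1 - e) \<le> s * 1" using s e by (intro mult_left_mono) auto
    then have t: "0 < t" "t \<le> s" using t0 td by auto
    have r: "t * e \<le> s * ell \<mu> t" using ell_ratio[OF assms t s(2)] by (simp add: e_def)
    have et: "(1 - e) * e \<le> ell \<mu> t" using r td s(1)
      by (metis mult.assoc mult_le_cancel_left_pos)
    have "1 / (1 - e) * (e / ell \<mu> t) \<le> 1 + C * e"
    proof (cases "e = 0")
      case True then show ?thesis by simp
    next
      case False
      then have ep: "e > 0" using e by simp
      have em: "1 - e > 0" using e m1 by simp
      have lt: "ell \<mu> t > 0" using et ep em by (smt (verit) mult_pos_pos)
      have "e / ell \<mu> t \<le> 1 / (1 - e)" using et ep em lt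
        by (simp add: divide_simps mult.commute)
      then have "1 / (1 - e) * (e / ell \<mu> t) \<le> 1 / (1 - e) * (1 / (1 - e))"
        using em by (intro mult_left_mono) auto
      also have "\<dots> = 1 + e * (2 - e) / (1 - e)^2"
      proof -
        have "(1 - e)^2 \<noteq> 0" using em by simp
        then have "1 + e * (2 - e) / (1 - e)^2 = ((1-e)^2 + e * (2 - e)) / (1 - e)^2"
          by (simp add: field_simps)
        also have "(1-e)^2 + e * (2 - e) = 1" by (simp add: power2_eq_square algebra_simps)
        finally show ?thesis by (simp add: power2_eq_square)
      qed
      also have "e * (2 - e) / (1 - e)^2 \<le> 2 * e / (1 - m)^2"
      proof -
        have "(1 - m)^2 \<le> (1 - e)^2" using e m1 by (intro power_mono) auto
        moreover have "0 < (1 - m)^2" using m1 by simp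
        ultimately have "e * (2 - e) / (1 - e)^2 \<le> e * (2 - e) / (1 - m)^2"
          using ep e m1 by (intro divide_left_mono) auto
        also have "\<dots> \<le> 2 * e / (1 - m)^2" using ep
          by (intro divide_right_mono) (auto simp: algebra_simps)
        finally show ?thesis .
      qed
      then have "1 + e * (2 - e) / (1 - e)^2 \<le> 1 + C * e" by (simp add: C_def)
      finally show ?thesis by simp
    qed
    then show ?thesis by (simp add: e_def s_def t_def)
  qed
  then show ?thesis using Cpos by blast
qed

end
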